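(* For any samples $(X_i,y_i)_{i=1}^n$ with $X_i\in\mathbb{R}^d$, $y_i\in\mathbb{R}$, and any $k\ge 0$, it holds that $\mathrm{Stability}(X,y)\le k$ if and only if $$\exists\lambda\in\mathbb{R}^{d-1}:\ \forall u\in\mathbb{R}^d:\ \exists w\in[0,1]^n:\ \|w\|_1\ge n-k \ \wedge\ \sum_{i=1}^n w_i(\langle\tilde X_i,\lambda\rangle - y_i)\langle X_i,u\rangle\ge 0.$$
   Context: For $w\in[0,1]^n$, $\mathrm{OLS}(X,y,w) := \arg\min_{\beta\in\mathbb{R}^d}\frac1n\sum_{i=1}^n w_i(\langle X_i,\beta\rangle - y_i)^2$, and $\mathrm{Stability}(X,y) := \inf_{w\in[0,1]^n,\ \beta\in\mathbb{R}^d}\{\, n-\|w\|_1 : \beta_1 = 0 \text{ and } \beta\in \mathrm{OLS}(X,y,w)\}$. $\tilde X_i\in\mathbb{R}^{d-1}$ denotes the vector of coordinates $2,\dots,d$ of $X_i$ (i.e. the $i$-th row of the $n\times(d-1)$ matrix $\tilde X$ whose columns are columns $2,\dots,d$ of the matrix $X$ with rows $X_i$). *)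

theory Defs
  imports "HOL-Analysis.Analysis" "HOL-Library.Extended_Real"
begin

text \<open>Row i (i < n) of the design matrix is
  X i :: nat \<Rightarrow> real, with coordinates j < d (0-indexed, so coordinate 0
  is the paper's coordinate 1). Vectors in R^m are functions nat \<Rightarrow> real
  that vanish outside {..<m}.\<close>

definition vecs :: "nat \<Rightarrow> (nat \<Rightarrow> real) set" where
  "vecs m = {v. \<forall>j\<ge>m. v j = 0}"

definition ip :: "nat \<Rightarrow> (nat \<Rightarrow> real) \<Rightarrow> (nat \<Rightarrow> real) \<Rightarrow> real" where
  "ip m a b = (\<Sum>j<m. a j * b j)"

definition weights :: "nat \<Rightarrow> (nat \<Rightarrow> real) set" where
  "weights n = {w. (\<forall>i<n. 0 \<le> w i \<and> w i \<le> 1) \<and> (\<forall>i\<ge>n. w i = 0)}"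

definition wloss :: "nat \<Rightarrow> nat \<Rightarrow> (nat \<Rightarrow> nat \<Rightarrow> real) \<Rightarrow> (nat \<Rightarrow> real)
    \<Rightarrow> (nat \<Rightarrow> real) \<Rightarrow> (nat \<Rightarrow> real) \<Rightarrow> real" where
  "wloss n d X y w \<beta> = (1 / real n) * (\<Sum>i<n. w i * (ip d (X i) \<beta> - y i)\<^sup>2)"

definition OLS :: "nat \<Rightarrow> nat \<Rightarrow> (nat \<Rightarrow> nat \<Rightarrow> real) \<Rightarrow> (nat \<Rightarrow> real)
    \<Rightarrow> (nat \<Rightarrow> real) \<Rightarrow> (nat \<Rightarrow> real) set" where
  "OLS n d X y w = {\<beta> \<in> vecs d. \<forall>\<beta>' \<in> vecs d. wloss n d X y w \<beta> \<le> wloss n d X y w \<beta>'}"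

text \<open>Stability, as an extended real (infimum of the empty set is +\<infinity>).\<close>
definition Stability :: "nat \<Rightarrow> nat \<Rightarrow> (nat \<Rightarrow> nat \<Rightarrow> real) \<Rightarrow> (nat \<Rightarrow> real) \<Rightarrow> ereal" where
  "Stability n d X y = Inf {ereal (real n - (\<Sum>i<n. w i)) | w \<beta>.
      w \<in> weights n \<and> \<beta> \<in> vecs d \<and> \<beta> 0 = 0 \<and> \<beta> \<in> OLS n d X y w}"

definition Xtilde :: "nat \<Rightarrow> (nat \<Rightarrow> nat \<Rightarrow> real) \<Rightarrow> nat \<Rightarrow> nat \<Rightarrow> real" where
  "Xtilde d X i = (\<lambda>j. if j < d - 1 then X i (Suc j) else 0)"

end

theory Submission
  imports Defs
begin
lemma wA: "w \<in> weights n \<Longrightarrow> w i \<in> (if i < n then {0..1} else {0})"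
  unfolding weights_def by auto
lemma wB:
  assumes h: "\<And>i. w i \<in> (if i < n then {0..1} else {0})"
  shows "w \<in> weights n"
  unfolding weights_def
proof (intro CollectI conjI allI impI)
  fix i assume i: "i < n"
  then have "w i \<in> {0..1}" using h[of i] by simp
  then show "0 \<le> w i" "w i \<le> 1" by auto
next
  fix i assume i: "n \<le> i"
  then have "w i \<in> {0}" using h[of i] by simp
  then show "w i = 0" by simp
qed
lemma weights_Pi: "weights n = Pi UNIV (\<lambda>i. if i < n then {0..1} else {0})"
  using wA wB by (auto simp: Pi_iff)
lemma cont_coord: "continuous_on S (\<lambda>x::nat\<Rightarrow>real. x i)"
  by (rule continuous_on_subset[OF continuous_on_product_coordinates]) simp
lemma tendsto_coord: "(f \<longlongrightarrow> l) F \<Longrightarrow> ((\<lambda>m. (f m :: nat \<Rightarrow> real) i) \<longlongrightarrow> l i) F"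
proof -
  assume "(f \<longlongrightarrow> l) F"
  moreover have "continuous_on UNIV (\<lambda>x::nat\<Rightarrow>real. x i)" by simp
  ultimately show ?thesis
    using continuous_on_tendsto_compose[of UNIV "\<lambda>x::nat\<Rightarrow>real. x i" f l F] by simp
qed
lemma compact_weights: "compact (weights n)"
proof -
  have "compactin (product_topology (\<lambda>_. euclidean) UNIV) (PiE UNIV (\<lambda>i. if i < n then {0..1::real} else {0}))"
    by (subst compactin_PiE) (auto simp: compactin_euclidean_iff)
  then have "compact (PiE UNIV (\<lambda>i. if i < n then {0..1::real} else {0}))"
    by (simp only: euclidean_product_topology compactin_euclidean_iff)
  then show ?thesis
    by (simp only: weights_Pi PiE_UNIV_domain)
qed

lemma compact_Wk: "compact {w \<in> weights n. real n - k \<le> (\<Sum>i<n. w i)}"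
proof -
  have c: "continuous_on UNIV (\<lambda>w::nat\<Rightarrow>real. \<Sum>i<n. w i)"
    by (rule continuous_on_sum) (rule cont_coord)
  have "closed {w::nat\<Rightarrow>real. real n - k \<le> (\<Sum>i<n. w i)}"
    by (rule closed_Collect_le[OF continuous_on_const c])
  moreover have "{w \<in> weights n. real n - k \<le> (\<Sum>i<n. w i)} = weights n \<inter> {w. real n - k \<le> (\<Sum>i<n. w i)}"
    by blast
  ultimately show ?thesis using compact_weights compact_Int_closed by metis
qed
lemma ip_Suc: "ip (Suc m) a b = ip m a b + a m * b m"
  by (simp add: ip_def)

lemma quad_proj:
  fixes p \<alpha> :: "nat \<Rightarrow> real" and N :: nat
  assumes A: "A = (\<Sum>i<N. (\<alpha> i)\<^sup>2)" "A > 0"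
  shows "(\<Sum>i<N. (p i - \<alpha> i * ((\<Sum>k<N. \<alpha> k * p k) / A))\<^sup>2) \<le> (\<Sum>i<N. (p i + \<alpha> i * t)\<^sup>2)"
proof -
  define P where "P = (\<Sum>k<N. \<alpha> k * p k)"
  define Q where "Q = (\<Sum>k<N. (p k)\<^sup>2)"
  have e1: "(\<Sum>i<N. (p i + \<alpha> i * t)\<^sup>2) = Q + 2 * t * P + t\<^sup>2 * A" for t
    unfolding Q_def P_def A(1)
    by (simp add: power2_eq_square algebra_simps sum.distrib sum_distrib_left sum_distrib_right)
  have e2: "(\<Sum>i<N. (p i - \<alpha> i * (P / A))\<^sup>2) = Q - 2 * (P/A) * P + (P/A)\<^sup>2 * A"
    using e1[of "- (P/A)"] by (simp add: algebra_simps)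
  have "Q - 2 * (P/A) * P + (P/A)\<^sup>2 * A + (A*t + P)\<^sup>2 / A = Q + 2 * t * P + t\<^sup>2 * A"
    using A(2) by (simp add: field_simps power2_eq_square)
  moreover have "(A*t + P)\<^sup>2 / A \<ge> 0" using A(2) by simp
  ultimately show ?thesis unfolding P_def[symmetric] using e1[of t] e2 by linarith
qed

lemma ls_attain:
  fixes N :: nat
  shows   "\<exists>lam\<in>vecs m. \<forall>mu. (\<Sum>i<N. (ip m (a i) lam - c i)\<^sup>2) \<le> (\<Sum>i<N. (ip m (a i) mu - c i)\<^sup>2)"
proof (induction m arbitrary: a c)
  case 0
  show ?case by (rule bexI[of _ "\<lambda>_. 0"]) (auto simp: ip_def vecs_def)
next
  case (Suc m)
  define \<alpha> where "\<alpha> i = a i m" for i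
  show ?case
  proof (cases "\<forall>i<N. \<alpha> i = 0")
    case True
    obtain lam where lam: "lam \<in> vecs m"
      "\<And>mu. (\<Sum>i<N. (ip m (a i) lam - c i)\<^sup>2) \<le> (\<Sum>i<N. (ip m (a i) mu - c i)\<^sup>2)"
      using Suc.IH by blast
    have eq: "ip (Suc m) (a i) mu = ip m (a i) mu" if "i < N" for i mu
      using True that by (simp add: ip_Suc \<alpha>_def)
    show ?thesis
    proof (rule bexI[of _ lam])
      show "lam \<in> vecs (Suc m)" using lam(1) by (simp add: vecs_def)
      show "\<forall>mu. (\<Sum>i<N. (ip (Suc m) (a i) lam - c i)\<^sup>2) \<le> (\<Sum>i<N. (ip (Suc m) (a i) mu - c i)\<^sup>2)"
        using lam(2) by (simp add: eq)
    qed
  next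
    case False
    then obtain i0 where i0: "i0 < N" "\<alpha> i0 \<noteq> 0" by blast
    define A where "A = (\<Sum>i<N. (\<alpha> i)\<^sup>2)"
    have "(\<alpha> i0)\<^sup>2 \<le> A" unfolding A_def
      using i0 by (intro member_le_sum) auto
    moreover have "(\<alpha> i0)\<^sup>2 > 0" using i0 by simp
    ultimately have Apos: "A > 0" by linarith
    define a' where "a' i = (\<lambda>j. a i j - \<alpha> i * (\<Sum>k<N. \<alpha> k * a k j) / A)" for i
    define c' where "c' i = c i - \<alpha> i * (\<Sum>k<N. \<alpha> k * c k) / A" for i
    have key: "ip m (a' i) mu - c' i = (ip m (a i) mu - c i)
        - \<alpha> i * ((\<Sum>k<N. \<alpha> k * (ip m (a k) mu - c k)) / A)" for i mu
    proof -
      have sw: "(\<Sum>j<m. (\<Sum>k<N. \<alpha> k * a k j) * mu j) = (\<Sum>k<N. \<alpha> k * (\<Sum>j<m. a k j * mu j))"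
        by (simp add: sum_distrib_left sum_distrib_right mult.assoc sum.swap[of _ "{..<m}"])
      have "ip m (a' i) mu = (\<Sum>j<m. a i j * mu j - \<alpha> i / A * ((\<Sum>k<N. \<alpha> k * a k j) * mu j))"
        unfolding a'_def ip_def by (rule sum.cong) (simp_all add: algebra_simps)
      also have "\<dots> = ip m (a i) mu - \<alpha> i / A * (\<Sum>j<m. (\<Sum>k<N. \<alpha> k * a k j) * mu j)"
        unfolding ip_def by (simp add: sum_subtractf sum_distrib_left)
      finally have "ip m (a' i) mu = ip m (a i) mu - \<alpha> i / A * (\<Sum>k<N. \<alpha> k * ip m (a k) mu)"
        unfolding sw ip_def .
      then show ?thesis unfolding c'_def
        by (simp add: algebra_simps sum_subtractf sum_distrib_left sum_divide_distrib diff_divide_distrib)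
    qed
    obtain lam' where lam': "lam' \<in> vecs m"
      "\<And>mu. (\<Sum>i<N. (ip m (a' i) lam' - c' i)\<^sup>2) \<le> (\<Sum>i<N. (ip m (a' i) mu - c' i)\<^sup>2)"
      using Suc.IH by blast
    define s where "s = (\<Sum>k<N. \<alpha> k * (ip m (a k) lam' - c k)) / A"
    define lam where "lam = lam'(m := - s)"
    have iplam: "ip (Suc m) (a i) lam = ip m (a i) lam' + \<alpha> i * (- s)" for i
    proof -
      have "ip m (a i) lam = ip m (a i) lam'" unfolding ip_def lam_def
        by (rule sum.cong) auto
      then show ?thesis by (simp add: ip_Suc \<alpha>_def lam_def)
    qed
    show ?thesis
    proof (rule bexI[of _ lam])
      show "lam \<in> vecs (Suc m)" using lam'(1) by (simp add: vecs_def lam_def)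
      show "\<forall>mu. (\<Sum>i<N. (ip (Suc m) (a i) lam - c i)\<^sup>2) \<le> (\<Sum>i<N. (ip (Suc m) (a i) mu - c i)\<^sup>2)"
      proof
        fix mu
        have "(\<Sum>i<N. (ip (Suc m) (a i) lam - c i)\<^sup>2) = (\<Sum>i<N. (ip m (a' i) lam' - c' i)\<^sup>2)"
          by (rule sum.cong) (simp_all add: iplam key s_def algebra_simps)
        also have "\<dots> \<le> (\<Sum>i<N. (ip m (a' i) mu - c' i)\<^sup>2)" by (rule lam'(2))
        also have "\<dots> \<le> (\<Sum>i<N. ((ip m (a i) mu - c i) + \<alpha> i * mu m)\<^sup>2)"
          unfolding key by (rule quad_proj[OF A_def Apos])
        also have "\<dots> = (\<Sum>i<N. (ip (Suc m) (a i) mu - c i)\<^sup>2)"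
          by (simp add: ip_Suc \<alpha>_def algebra_simps)
        finally show "(\<Sum>i<N. (ip (Suc m) (a i) lam - c i)\<^sup>2) \<le> (\<Sum>i<N. (ip (Suc m) (a i) mu - c i)\<^sup>2)" .
      qed
    qed
  qed
qed

definition Lsum :: "nat \<Rightarrow> nat \<Rightarrow> (nat \<Rightarrow> nat \<Rightarrow> real) \<Rightarrow> (nat \<Rightarrow> real)
    \<Rightarrow> (nat \<Rightarrow> real) \<Rightarrow> (nat \<Rightarrow> real) \<Rightarrow> real" where
  "Lsum n d X y w \<beta> = (\<Sum>i<n. w i * (ip d (X i) \<beta> - y i)\<^sup>2)"

lemma wloss_le: "wloss n d X y w b \<le> wloss n d X y w b' \<longleftrightarrow> Lsum n d X y w b \<le> Lsum n d X y w b'"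
proof (cases "n = 0")
  case True then show ?thesis by (simp add: wloss_def Lsum_def)
next
  case False
  then have "0 < 1 / real n" by simp
  then show ?thesis unfolding wloss_def Lsum_def
    by (simp add: divide_le_cancel)
qed

lemma OLS_alt: "OLS n d X y w = {b \<in> vecs d. \<forall>b' \<in> vecs d. Lsum n d X y w b \<le> Lsum n d X y w b'}"
  unfolding OLS_def wloss_le ..

definition bshift :: "(nat \<Rightarrow> real) \<Rightarrow> nat \<Rightarrow> real" where
  "bshift lam = (\<lambda>j. if j = 0 then 0 else lam (j - 1))"

lemma ip_shift:
  assumes "d \<ge> 1"
  shows "ip d (X i) b = X i 0 * b 0 + ip (d - 1) (Xtilde d X i) (\<lambda>j. b (Suc j))"
proof -
  have d: "d = Suc (d - 1)" using assms by simp
  have "ip d (X i) b = (\<Sum>j<Suc (d-1). X i j * b j)" unfolding ip_def using d by metis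
  also have "\<dots> = X i 0 * b 0 + (\<Sum>j<d-1. X i (Suc j) * b (Suc j))"
    by (subst sum.lessThan_Suc_shift) simp
  also have "(\<Sum>j<d-1. X i (Suc j) * b (Suc j)) = ip (d - 1) (Xtilde d X i) (\<lambda>j. b (Suc j))"
    unfolding ip_def Xtilde_def by (rule sum.cong) auto
  finally show ?thesis .
qed

lemma ip_bshift: "d \<ge> 1 \<Longrightarrow> ip d (X i) (bshift lam) = ip (d - 1) (Xtilde d X i) lam"
  by (subst ip_shift) (auto simp: bshift_def)

lemma ip_b0: "d \<ge> 1 \<Longrightarrow> b 0 = 0 \<Longrightarrow> ip d (X i) b = ip (d - 1) (Xtilde d X i) (\<lambda>j. b (Suc j))"
  by (subst ip_shift) auto

lemma bshift_vecs: "d \<ge> 1 \<Longrightarrow> lam \<in> vecs (d - 1) \<Longrightarrow> bshift lam \<in> vecs d"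
  by (auto simp: vecs_def bshift_def)

lemma ip_lin: "ip m a (\<lambda>j. b j + t * c j) = ip m a b + t * ip m a c"
  unfolding ip_def by (simp add: algebra_simps sum.distrib sum_distrib_left)

lemma Lsum_expand:
  "Lsum n d X y w (\<lambda>j. b j + t * u j) = Lsum n d X y w b
     + 2 * t * (\<Sum>i<n. w i * (ip d (X i) b - y i) * ip d (X i) u)
     + t\<^sup>2 * (\<Sum>i<n. w i * (ip d (X i) u)\<^sup>2)"
proof -
  have "Lsum n d X y w (\<lambda>j. b j + t * u j) = (\<Sum>i<n. w i * (ip d (X i) b - y i)\<^sup>2
      + 2 * t * (w i * (ip d (X i) b - y i) * ip d (X i) u) + t\<^sup>2 * (w i * (ip d (X i) u)\<^sup>2))"
    unfolding Lsum_def ip_lin by (rule sum.cong) (simp_all add: power2_eq_square algebra_simps)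
  also have "\<dots> = Lsum n d X y w b
     + 2 * t * (\<Sum>i<n. w i * (ip d (X i) b - y i) * ip d (X i) u)
     + t\<^sup>2 * (\<Sum>i<n. w i * (ip d (X i) u)\<^sup>2)"
    unfolding Lsum_def by (simp add: sum.distrib sum_distrib_left)
  finally show ?thesis .
qed

lemma quad_zero:
  fixes G Q :: real
  assumes "\<And>t. 0 \<le> 2 * t * G + t\<^sup>2 * Q" "Q \<ge> 0"
  shows "G = 0"
proof (rule ccontr)
  assume G: "G \<noteq> 0"
  show False
  proof (cases "Q = 0")
    case True
    have "0 \<le> 2 * (-G) * G + (-G)\<^sup>2 * Q" by (rule assms(1))
    then have "0 \<le> - 2 * G\<^sup>2" using True by (simp add: power2_eq_square)
    then show False using G by simp
  next
    case False
    then have Q: "Q > 0" using assms(2) by simp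
    have "0 \<le> 2 * (-G/Q) * G + (-G/Q)\<^sup>2 * Q" by (rule assms(1))
    also have "2 * (-G/Q) * G + (-G/Q)\<^sup>2 * Q = - (G\<^sup>2 / Q)"
      using Q by (simp add: field_simps power2_eq_square)
    finally have "G\<^sup>2 / Q \<le> 0" by simp
    moreover have "G\<^sup>2 / Q > 0" using G Q by simp
    ultimately show False by simp
  qed
qed

lemma OLS_iff:
  assumes w: "w \<in> weights n" and b: "b \<in> vecs d"
  shows "b \<in> OLS n d X y w \<longleftrightarrow>
     (\<forall>u \<in> vecs d. (\<Sum>i<n. w i * (ip d (X i) b - y i) * ip d (X i) u) = 0)"
proof -
  have Qnn: "(\<Sum>i<n. w i * (ip d (X i) u)\<^sup>2) \<ge> 0" for u
    using w by (intro sum_nonneg) (auto simp: weights_def)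
  have vadd: "(\<lambda>j. b j + t * u j) \<in> vecs d" if "u \<in> vecs d" for u t
    using b that by (auto simp: vecs_def)
  show ?thesis
  proof
    assume "b \<in> OLS n d X y w"
    then have min: "\<And>b'. b' \<in> vecs d \<Longrightarrow> Lsum n d X y w b \<le> Lsum n d X y w b'"
      by (auto simp: OLS_alt)
    show "\<forall>u \<in> vecs d. (\<Sum>i<n. w i * (ip d (X i) b - y i) * ip d (X i) u) = 0"
    proof
      fix u assume u: "u \<in> vecs d"
      show "(\<Sum>i<n. w i * (ip d (X i) b - y i) * ip d (X i) u) = 0"
      proof (rule quad_zero[OF _ Qnn])
        fix t
        show "0 \<le> 2 * t * (\<Sum>i<n. w i * (ip d (X i) b - y i) * ip d (X i) u) + t\<^sup>2 * (\<Sum>i<n. w i * (ip d (X i) u)\<^sup>2)"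
          using min[OF vadd[OF u, of t]] unfolding Lsum_expand by linarith
      qed
    qed
  next
    assume G: "\<forall>u \<in> vecs d. (\<Sum>i<n. w i * (ip d (X i) b - y i) * ip d (X i) u) = 0"
    show "b \<in> OLS n d X y w"
      unfolding OLS_alt
    proof (intro CollectI conjI ballI b)
      fix b' assume b': "b' \<in> vecs d"
      define u where "u = (\<lambda>j. b' j - b j)"
      have u: "u \<in> vecs d" using b b' by (auto simp: vecs_def u_def)
      have "b' = (\<lambda>j. b j + 1 * u j)" by (simp add: u_def)
      then have "Lsum n d X y w b' = Lsum n d X y w b + (\<Sum>i<n. w i * (ip d (X i) u)\<^sup>2)"
        using G u Lsum_expand[of n d X y w b 1 u] by simp
      then show "Lsum n d X y w b \<le> Lsum n d X y w b'" using Qnn[of u] by linarith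
    qed
  qed
qed


lemma suff:
  fixes n d :: nat and X :: "nat \<Rightarrow> nat \<Rightarrow> real" and y :: "nat \<Rightarrow> real" and k :: real
  assumes d1: "d \<ge> 1"
    and lam: "lam \<in> vecs (d - 1)"
    and H: "\<forall>u \<in> vecs d. \<exists>w \<in> weights n.
        (\<Sum>i<n. w i) \<ge> real n - k \<and>
        (\<Sum>i<n. w i * (ip (d - 1) (Xtilde d X i) lam - y i) * ip d (X i) u) \<ge> 0"
  shows "Stability n d X y \<le> ereal k"
proof -
  define r where "r i = ip (d - 1) (Xtilde d X i) lam - y i" for i
  define cv where "cv w j = (\<Sum>i<n. w i * r i * X i j)" for w :: "nat \<Rightarrow> real" and j
  define Nf where "Nf w = (\<Sum>j<d. (cv w j)\<^sup>2)" for w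
  define Wk where "Wk = {w \<in> weights n. real n - k \<le> (\<Sum>i<n. w i)}"
  have ipu: "(\<Sum>i<n. w i * r i * ip d (X i) u) = (\<Sum>j<d. u j * cv w j)" for w u
  proof -
    have "(\<Sum>i<n. w i * r i * ip d (X i) u) = (\<Sum>i<n. \<Sum>j<d. w i * r i * X i j * u j)"
      unfolding ip_def by (simp add: sum_distrib_left mult.assoc)
    also have "\<dots> = (\<Sum>j<d. \<Sum>i<n. w i * r i * X i j * u j)" by (rule sum.swap)
    also have "\<dots> = (\<Sum>j<d. u j * cv w j)"
      unfolding cv_def by (simp add: sum_distrib_left mult.commute mult.left_commute)
    finally show ?thesis .
  qed
  have H': "\<forall>u \<in> vecs d. \<exists>w \<in> Wk. (\<Sum>j<d. u j * cv w j) \<ge> 0"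
    using H unfolding Wk_def ipu[symmetric] r_def by auto
  have "(\<lambda>_. 0) \<in> vecs d" by (simp add: vecs_def)
  then have ne: "Wk \<noteq> {}" using H' by blast
  have cont: "continuous_on Wk Nf"
    unfolding Nf_def cv_def by (intro continuous_intros cont_coord)
  obtain ws where ws: "ws \<in> Wk" "\<And>w. w \<in> Wk \<Longrightarrow> Nf ws \<le> Nf w"
    using continuous_attains_inf[OF compact_Wk[of n k, folded Wk_def] ne cont] by blast
  have Nf0: "Nf ws = 0"
  proof (rule ccontr)
    assume "Nf ws \<noteq> 0"
    moreover have "Nf ws \<ge> 0" unfolding Nf_def by (intro sum_nonneg) auto
    ultimately have apos: "Nf ws > 0" by simp
    define a where "a = Nf ws"
    define u where "u j = (if j < d then - cv ws j else 0)" for j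
    have "u \<in> vecs d" by (simp add: u_def vecs_def)
    then obtain w where w: "w \<in> Wk" "(\<Sum>j<d. u j * cv w j) \<ge> 0" using H' by blast
    define P where "P = (\<Sum>j<d. cv ws j * cv w j)"
    have "(\<Sum>j<d. u j * cv w j) = - P" unfolding P_def u_def
      by (simp add: sum_negf[symmetric])
    then have Ple: "P \<le> 0" using w(2) by simp
    define D where "D = (\<Sum>j<d. (cv w j - cv ws j)\<^sup>2)"
    have Dnn: "D \<ge> 0" unfolding D_def by (intro sum_nonneg) auto
    define t where "t = a / (a + D)"
    have t01: "0 < t" "t \<le> 1" using apos Dnn by (auto simp: t_def a_def)
    have tD: "t * D \<le> a" using apos Dnn unfolding t_def a_def
      by (simp add: field_simps)
    define wt where "wt i = ws i + t * (w i - ws i)" for i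
    have wtW: "wt \<in> Wk"
    proof -
      have "wt \<in> weights n"
      proof -
        have "0 \<le> wt i \<and> wt i \<le> 1" if "i < n" for i
        proof -
          have "0 \<le> ws i" "ws i \<le> 1" "0 \<le> w i" "w i \<le> 1"
            using ws(1) w(1) that by (auto simp: Wk_def weights_def)
          moreover have "wt i = (1 - t) * ws i + t * w i" by (simp add: wt_def algebra_simps)
          moreover have "0 \<le> 1 - t" using t01 by simp
          moreover have "0 \<le> t" using t01 by simp
          ultimately show ?thesis
            by (smt (verit) mult_left_le mult_nonneg_nonneg)
        qed
        moreover have "wt i = 0" if "i \<ge> n" for i
          using ws(1) w(1) that by (auto simp: Wk_def weights_def wt_def)
        ultimately show ?thesis by (auto simp: weights_def)
      qed
      moreover have "real n - k \<le> (\<Sum>i<n. wt i)"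
      proof -
        have eqs: "(\<Sum>i<n. wt i) = (1 - t) * (\<Sum>i<n. ws i) + t * (\<Sum>i<n. w i)"
          by (simp add: wt_def sum.distrib sum_distrib_left algebra_simps sum_subtractf)
        have s1: "real n - k \<le> (\<Sum>i<n. ws i)" and s2: "real n - k \<le> (\<Sum>i<n. w i)"
          using ws(1) w(1) by (auto simp: Wk_def)
        have "(1 - t) * (real n - k) \<le> (1 - t) * (\<Sum>i<n. ws i)"
          using t01 s1 by (intro mult_left_mono) auto
        moreover have "t * (real n - k) \<le> t * (\<Sum>i<n. w i)"
          using t01 s2 by (intro mult_left_mono) auto
        ultimately have "(1 - t) * (real n - k) + t * (real n - k) \<le> (\<Sum>i<n. wt i)"
          unfolding eqs by linarith
        then show ?thesis by (simp add: algebra_simps)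
      qed
      ultimately show ?thesis by (simp add: Wk_def)
    qed
    have cvt: "cv wt j = cv ws j + t * (cv w j - cv ws j)" for j
      unfolding cv_def wt_def
      by (simp add: sum.distrib sum_distrib_left algebra_simps sum_subtractf)
    have "Nf wt = (\<Sum>j<d. (cv ws j)\<^sup>2 + 2 * t * (cv ws j * cv w j - (cv ws j)\<^sup>2) + t\<^sup>2 * (cv w j - cv ws j)\<^sup>2)"
      unfolding Nf_def cvt by (rule sum.cong) (simp_all add: power2_eq_square algebra_simps)
    also have "\<dots> = a + 2 * t * (P - a) + t\<^sup>2 * D"
      unfolding a_def Nf_def P_def D_def by (simp add: sum.distrib sum_distrib_left sum_subtractf right_diff_distrib)
    finally have Nwt: "Nf wt = a + 2 * t * (P - a) + t\<^sup>2 * D" .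
    have "t * (t * D) \<le> t * a" using tD t01 by (intro mult_left_mono) auto
    moreover have "2 * t * (P - a) \<le> 2 * t * (- a)" using Ple t01 by (intro mult_left_mono) auto
    moreover have "t * a > 0" using t01 apos a_def by simp
    ultimately have "Nf wt < a" unfolding Nwt by (simp add: power2_eq_square algebra_simps)
    then show False using ws(2)[OF wtW] a_def by simp
  qed
  have cv0: "cv ws j = 0" if "j < d" for j
  proof -
    have "(\<Sum>j<d. (cv ws j)\<^sup>2) = 0" using Nf0 by (simp add: Nf_def)
    then have "\<forall>j\<in>{..<d}. (cv ws j)\<^sup>2 = 0" by (subst (asm) sum_nonneg_eq_0_iff) auto
    then show ?thesis using that by simp
  qed
  have wsw: "ws \<in> weights n" and wss: "real n - k \<le> (\<Sum>i<n. ws i)" using ws(1) by (auto simp: Wk_def)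
  have bv: "bshift lam \<in> vecs d" by (rule bshift_vecs[OF d1 lam])
  have "bshift lam \<in> OLS n d X y ws"
  proof (subst OLS_iff[OF wsw bv], intro ballI)
    fix u assume "u \<in> vecs d"
    have "(\<Sum>i<n. ws i * (ip d (X i) (bshift lam) - y i) * ip d (X i) u) = (\<Sum>i<n. ws i * r i * ip d (X i) u)"
      by (simp add: ip_bshift[OF d1] r_def)
    also have "\<dots> = 0" unfolding ipu using cv0 by simp
    finally show "(\<Sum>i<n. ws i * (ip d (X i) (bshift lam) - y i) * ip d (X i) u) = 0" .
  qed
  then have mem: "ereal (real n - (\<Sum>i<n. ws i)) \<in> {ereal (real n - (\<Sum>i<n. w i)) | w \<beta>.
      w \<in> weights n \<and> \<beta> \<in> vecs d \<and> \<beta> 0 = 0 \<and> \<beta> \<in> OLS n d X y w}"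
    using wsw bv by (intro CollectI exI[of _ ws] exI[of _ "bshift lam"]) (auto simp: bshift_def)
  have "Stability n d X y \<le> ereal (real n - (\<Sum>i<n. ws i))"
    unfolding Stability_def by (rule Inf_lower[OF mem])
  also have "\<dots> \<le> ereal k" using wss by simp
  finally show ?thesis .
qed


lemma nec:
  fixes n d :: nat and X :: "nat \<Rightarrow> nat \<Rightarrow> real" and y :: "nat \<Rightarrow> real" and k :: real
  assumes d1: "d \<ge> 1" and S: "Stability n d X y \<le> ereal k"
  shows "\<exists>lam \<in> vecs (d - 1). \<forall>u \<in> vecs d. \<exists>w \<in> weights n.
        (\<Sum>i<n. w i) \<ge> real n - k \<and>
        (\<Sum>i<n. w i * (ip (d - 1) (Xtilde d X i) lam - y i) * ip d (X i) u) \<ge> 0"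
proof -
  define SS where "SS = {ereal (real n - (\<Sum>i<n. w i)) | w \<beta>.
      w \<in> weights n \<and> \<beta> \<in> vecs d \<and> \<beta> 0 = 0 \<and> \<beta> \<in> OLS n d X y w}"
  have "\<forall>m::nat. \<exists>w \<beta>. w \<in> weights n \<and> \<beta> \<in> vecs d \<and> \<beta> 0 = 0 \<and> \<beta> \<in> OLS n d X y w \<and>
      real n - (\<Sum>i<n. w i) < k + 1 / (real m + 1)"
  proof
    fix m :: nat
    have "ereal k < ereal (k + 1 / (real m + 1))" by simp
    then have "Inf SS < ereal (k + 1 / (real m + 1))"
      using S unfolding Stability_def SS_def[symmetric] by (rule le_less_trans[rotated])
    then obtain x where "x \<in> SS" "x < ereal (k + 1 / (real m + 1))" by (auto simp: Inf_less_iff)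
    then show "\<exists>w \<beta>. w \<in> weights n \<and> \<beta> \<in> vecs d \<and> \<beta> 0 = 0 \<and> \<beta> \<in> OLS n d X y w \<and>
      real n - (\<Sum>i<n. w i) < k + 1 / (real m + 1)"
    proof -
      from \<open>x \<in> SS\<close> obtain w \<beta> where wb: "x = ereal (real n - (\<Sum>i<n. w i))" "w \<in> weights n"
        "\<beta> \<in> vecs d" "\<beta> 0 = 0" "\<beta> \<in> OLS n d X y w" unfolding SS_def by blast
      have "real n - (\<Sum>i<n. w i) < k + 1 / (real m + 1)" using \<open>x < _\<close> wb(1) by simp
      then show ?thesis using wb by blast
    qed
  qed
  then obtain W B where WB: "\<And>m. W m \<in> weights n" "\<And>m. B m \<in> vecs d" "\<And>m. B m 0 = 0"
     "\<And>m. B m \<in> OLS n d X y (W m)" "\<And>m. real n - (\<Sum>i<n. W m i) < k + 1 / (real m + 1)"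
    by metis
  have "seq_compact (weights n)" by (rule compact_imp_seq_compact[OF compact_weights])
  then obtain l r where l: "l \<in> weights n" and r: "strict_mono r" and lim: "(W \<circ> r) \<longlonglongrightarrow> l"
    using WB(1) unfolding seq_compact_def by metis
  define V where "V m = W (r m)" for m
  have limV: "V \<longlonglongrightarrow> l" using lim unfolding V_def o_def by simp
  have Vc: "(\<lambda>m. V m i) \<longlonglongrightarrow> l i" for i by (rule tendsto_coord[OF limV])
  have Vw: "V m \<in> weights n" for m using WB(1) by (simp add: V_def)
  have Vnn: "0 \<le> V m i" for m i using Vw[of m] by (cases "i < n") (auto simp: weights_def)
  have lnn: "0 \<le> l i" for i using l by (cases "i < n") (auto simp: weights_def)
  have Vb: "real n - k - 1 / (real m + 1) \<le> (\<Sum>i<n. V m i)" for m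
  proof -
    have "real m \<le> real (r m)" using seq_suble[OF r, of m] by simp
    then have "1 / (real (r m) + 1) \<le> 1 / (real m + 1)" by (intro divide_left_mono) auto
    then show ?thesis using WB(5)[of "r m"] by (simp add: V_def)
  qed
  have sumlim: "(\<lambda>m. \<Sum>i<n. V m i) \<longlonglongrightarrow> (\<Sum>i<n. l i)" by (intro tendsto_sum Vc)
  have e0: "(\<lambda>m. 1 / (real m + 1)) \<longlonglongrightarrow> 0"
    using LIMSEQ_inverse_real_of_nat by (simp add: inverse_eq_divide add.commute)
  have elim: "(\<lambda>m. real n - k - 1 / (real m + 1)) \<longlonglongrightarrow> real n - k - 0"
    by (intro tendsto_diff tendsto_const e0)
  have suml: "real n - k \<le> (\<Sum>i<n. l i)"
    using LIMSEQ_le[OF elim sumlim] Vb by auto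
  define a where "a i = (\<lambda>j. sqrt (l i) * Xtilde d X i j)" for i
  define c where "c i = sqrt (l i) * y i" for i
  define Af where "Af mu = (\<Sum>i<n. l i * (ip (d - 1) (Xtilde d X i) mu - y i)\<^sup>2)" for mu
  have Aeq: "(\<Sum>i<n. (ip (d - 1) (a i) mu - c i)\<^sup>2) = Af mu" for mu
  proof -
    have "(ip (d - 1) (a i) mu - c i)\<^sup>2 = l i * (ip (d - 1) (Xtilde d X i) mu - y i)\<^sup>2" for i
    proof -
      have "ip (d - 1) (a i) mu = sqrt (l i) * ip (d - 1) (Xtilde d X i) mu"
        unfolding a_def ip_def by (simp add: sum_distrib_left mult.assoc)
      then have "ip (d - 1) (a i) mu - c i = sqrt (l i) * (ip (d - 1) (Xtilde d X i) mu - y i)"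
        unfolding c_def by (simp add: right_diff_distrib)
      then have "(ip (d - 1) (a i) mu - c i)\<^sup>2 = (sqrt (l i))\<^sup>2 * (ip (d - 1) (Xtilde d X i) mu - y i)\<^sup>2"
        by (simp only: power_mult_distrib)
      then show ?thesis using lnn[of i] by (simp only: real_sqrt_pow2)
    qed
    then show ?thesis unfolding Af_def by simp
  qed
  obtain lam where lam: "lam \<in> vecs (d - 1)" "\<And>mu. Af lam \<le> Af mu"
    using ls_attain[where m="d - 1" and N=n and a=a and c=c] unfolding Aeq by blast
  have bv: "bshift lam \<in> vecs d" by (rule bshift_vecs[OF d1 lam(1)])
  have OLSl: "bshift lam \<in> OLS n d X y l"
    unfolding OLS_alt
  proof (intro CollectI conjI ballI bv)
    fix b' assume b': "b' \<in> vecs d"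
    define Bv where "Bv = Lsum n d X y l b'"
    have Lb: "Lsum n d X y l (bshift lam) = Af lam"
      by (simp add: Lsum_def Af_def ip_bshift[OF d1])
    show "Lsum n d X y l (bshift lam) \<le> Lsum n d X y l b'"
    proof (rule ccontr)
      assume "\<not> ?thesis"
      then have gt: "Af lam > Bv" using Lb Bv_def by simp
      have Bnn: "Bv \<ge> 0" unfolding Bv_def Lsum_def using lnn by (intro sum_nonneg mult_nonneg_nonneg) auto
      define aa where "aa = Af lam"
      have apos: "aa > 0" using gt Bnn aa_def by simp
      define eps where "eps = (aa - Bv) / (2 * aa)"
      have eps: "0 < eps" "eps < 1" using apos gt Bnn unfolding eps_def aa_def by (auto simp: field_simps)
      have epsv: "(1 - eps) * aa = (aa + Bv) / 2" using apos unfolding eps_def by (simp add: field_simps)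
      have ev1: "eventually (\<lambda>m. \<forall>i\<in>{..<n}. (1 - eps) * l i \<le> V m i) sequentially"
      proof (rule eventually_ball_finite, simp, intro ballI)
        fix i
        show "eventually (\<lambda>m. (1 - eps) * l i \<le> V m i) sequentially"
        proof (cases "l i = 0")
          case True then show ?thesis using Vnn by simp
        next
          case False
          then have "(1 - eps) * l i < l i" using lnn[of i] eps by (simp add: algebra_simps)
          from order_tendstoD(1)[OF Vc this] show ?thesis
            by (rule eventually_mono) simp
        qed
      qed
      have LsumV: "(\<lambda>m. Lsum n d X y (V m) b') \<longlonglongrightarrow> Bv"
        unfolding Lsum_def Bv_def by (intro tendsto_sum tendsto_mult_right Vc)
      have "Bv < (1 - eps) * aa" using epsv gt aa_def by simp
      from order_tendstoD(2)[OF LsumV this]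
      have ev2: "eventually (\<lambda>m. Lsum n d X y (V m) b' < (1 - eps) * aa) sequentially" .
      from eventually_conj[OF ev1 ev2] obtain N where
        N: "\<And>m. m \<ge> N \<Longrightarrow> (\<forall>i\<in>{..<n}. (1 - eps) * l i \<le> V m i) \<and> Lsum n d X y (V m) b' < (1 - eps) * aa"
        unfolding eventually_sequentially by blast
      define mu where "mu = (\<lambda>j. B (r N) (Suc j))"
      have m1: "\<forall>i\<in>{..<n}. (1 - eps) * l i \<le> V N i" and m2: "Lsum n d X y (V N) b' < (1 - eps) * aa"
        using N[of N] by auto
      have "B (r N) \<in> OLS n d X y (V N)" using WB(4) by (simp add: V_def)
      then have m3: "Lsum n d X y (V N) (B (r N)) \<le> Lsum n d X y (V N) b'"
        using b' by (auto simp: OLS_alt)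
      have m4: "Lsum n d X y (V N) (B (r N)) = (\<Sum>i<n. V N i * (ip (d - 1) (Xtilde d X i) mu - y i)\<^sup>2)"
        unfolding Lsum_def mu_def using ip_b0[OF d1, of "B (r N)", OF WB(3)[of "r N"]] by simp
      have "(1 - eps) * aa \<le> (1 - eps) * Af mu"
        using lam(2)[of mu] eps aa_def by (intro mult_left_mono) auto
      also have "\<dots> = (\<Sum>i<n. ((1 - eps) * l i) * (ip (d - 1) (Xtilde d X i) mu - y i)\<^sup>2)"
        unfolding Af_def by (simp add: sum_distrib_left mult.assoc)
      also have "\<dots> \<le> (\<Sum>i<n. V N i * (ip (d - 1) (Xtilde d X i) mu - y i)\<^sup>2)"
        using m1 by (intro sum_mono mult_right_mono) auto
      finally show False using m2 m3 m4 by linarith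
    qed
  qed
  have G: "\<forall>u \<in> vecs d. (\<Sum>i<n. l i * (ip d (X i) (bshift lam) - y i) * ip d (X i) u) = 0"
    using OLSl OLS_iff[OF l bv] by blast
  show ?thesis
  proof (rule bexI[OF _ lam(1)], intro ballI)
    fix u assume u: "u \<in> vecs d"
    show "\<exists>w\<in>weights n. real n - k \<le> (\<Sum>i<n. w i) \<and>
        0 \<le> (\<Sum>i<n. w i * (ip (d - 1) (Xtilde d X i) lam - y i) * ip d (X i) u)"
      using l suml G[rule_format, OF u] by (intro bexI[of _ l]) (auto simp: ip_bshift[OF d1])
  qed
qed

theorem lemma1:
  fixes n d :: nat and X :: "nat \<Rightarrow> nat \<Rightarrow> real" and y :: "nat \<Rightarrow> real" and k :: real
  assumes "d \<ge> 1" and "k \<ge> 0"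
  shows "Stability n d X y \<le> ereal k \<longleftrightarrow>
    (\<exists>lam \<in> vecs (d - 1). \<forall>u \<in> vecs d. \<exists>w \<in> weights n.
        (\<Sum>i<n. w i) \<ge> real n - k \<and>
        (\<Sum>i<n. w i * (ip (d - 1) (Xtilde d X i) lam - y i) * ip d (X i) u) \<ge> 0)"
proof
  assume "Stability n d X y \<le> ereal k"
  then show "\<exists>lam \<in> vecs (d - 1). \<forall>u \<in> vecs d. \<exists>w \<in> weights n.
        (\<Sum>i<n. w i) \<ge> real n - k \<and>
        (\<Sum>i<n. w i * (ip (d - 1) (Xtilde d X i) lam - y i) * ip d (X i) u) \<ge> 0"
    by (rule nec[OF assms(1)])
next
  assume "\<exists>lam \<in> vecs (d - 1). \<forall>u \<in> vecs d. \<exists>w \<in> weights n.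
        (\<Sum>i<n. w i) \<ge> real n - k \<and>
        (\<Sum>i<n. w i * (ip (d - 1) (Xtilde d X i) lam - y i) * ip d (X i) u) \<ge> 0"
  then obtain lam where "lam \<in> vecs (d - 1)" "\<forall>u \<in> vecs d. \<exists>w \<in> weights n.
        (\<Sum>i<n. w i) \<ge> real n - k \<and>
        (\<Sum>i<n. w i * (ip (d - 1) (Xtilde d X i) lam - y i) * ip d (X i) u) \<ge> 0" by blast
  then show "Stability n d X y \<le> ereal k" by (rule suff[OF assms(1)])
qed

end
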